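(* Let $m\ge 2$ be an integer, let $B\subseteq m\mathbb Z$ be a finite nonempty set, and let $F\subseteq\mathbb Z$ be a finite nonempty set all of whose elements are congruent to $\tilde f$ modulo $m$, where $\tilde f\in\{1,\dots,m-1\}$. If \[m\ge \tilde f+2\tilde f\left\lfloor\frac{|B|+1}{\tilde f}\right\rfloor+\operatorname{mod}_{\tilde f}(|B|+1),\] then $C=m\mathbb N\cup B\cup F$ arises as a minimal additive complement in $\mathbb Z$.
   Context: $\mathbb N=\{0,1,2,\dots\}$, $m\mathbb N=\{mk:k\in\mathbb N\}$; $\operatorname{mod}_{a}n$ denotes the remainder of $n$ upon division by $a$. For $C,W\subseteq\mathbb Z$, $C+W=\{c+w:c\in C,w\in W\}$. $C$ is a minimal additive complement (MAC) to $W$ if $C+W=\mathbb Z$ and no proper subset $C'\subsetneq C$ satisfies $C'+W=\mathbb Z$. $C$ arises as a MAC if there exists $W\subseteq\mathbb Z$ to which $C$ is a MAC. *)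

theory Defs
  imports Main
begin

definition sumset :: "int set \<Rightarrow> int set \<Rightarrow> int set" where
  "sumset C W = {c + w | c w. c \<in> C \<and> w \<in> W}"

definition is_MAC :: "int set \<Rightarrow> int set \<Rightarrow> bool" where
  "is_MAC C W \<longleftrightarrow> sumset C W = UNIV \<and> (\<forall>C'. C' \<subset> C \<longrightarrow> sumset C' W \<noteq> UNIV)"

definition arises_as_MAC :: "int set \<Rightarrow> bool" where
  "arises_as_MAC C \<longleftrightarrow> (\<exists>W. is_MAC C W)"

end

theory Submission
  imports Defs
begin

lemma Qf_eq: "(f::int) \<ge> 1 \<Longrightarrow> 2*f*(i div f) + i mod f = i + f*(i div f)"
proof -
  have "i = f*(i div f) + i mod f" by simp
  thus ?thesis by (simp add: algebra_simps)
qed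

lemma Qf_mono: assumes "(f::int) \<ge> 1" "i < j"
  shows "2*f*(i div f) + i mod f < 2*f*(j div f) + j mod f"
proof -
  have "i div f \<le> j div f" using assms by (simp add: zdiv_mono1)
  hence "f*(i div f) \<le> f*(j div f)" using assms by simp
  thus ?thesis using Qf_eq[OF assms(1), of i] Qf_eq[OF assms(1), of j] assms by linarith
qed

lemma Qf_nof: assumes "(f::int) \<ge> 1"
  shows "2*f*(i div f) + i mod f \<noteq> 2*f*(j div f) + j mod f + f"
proof
  assume h: "2*f*(i div f) + i mod f = 2*f*(j div f) + j mod f + f"
  define a where "a = i div f - j div f"
  have r: "0 \<le> i mod f" "i mod f < f" "0 \<le> j mod f" "j mod f < f" using assms by auto
  have e: "2*f*a = j mod f + f - i mod f" using h unfolding a_def by (simp add: algebra_simps)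
  show False
  proof (cases "a \<ge> 1")
    case True
    hence "2*f*a \<ge> 2*f*1" using assms by (intro mult_left_mono) auto
    thus False using e r by simp
  next
    case False
    hence "a \<le> 0" by simp
    hence "2*f*a \<le> 0" using assms by (simp add: mult_nonneg_nonpos)
    thus False using e r by simp
  qed
qed

lemma Qf_bound: assumes "(f::int) \<ge> 1" "i \<le> N"
  "m \<ge> f + 2 * f * ((N + 1) div f) + (N + 1) mod f"
  shows "2*f*(i div f) + i mod f + f < m"
proof -
  have "2*f*(i div f) + i mod f < 2 * f * ((N + 1) div f) + (N + 1) mod f"
    using Qf_mono[OF assms(1), of i "N+1"] assms(2) by linarith
  thus ?thesis using assms(3) by linarith
qed

lemma transl_zero: assumes "finite (F::int set)" "F \<noteq> {}" "\<forall>x\<in>F. x + t \<in> F"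
  shows "t = 0"
proof -
  have "Max F + t \<in> F" "Min F + t \<in> F" using assms by auto
  hence "Max F + t \<le> Max F" "Min F + t \<ge> Min F" using Max_ge[OF assms(1)] Min_le[OF assms(1)] by blast+
  thus ?thesis by simp
qed

lemma below_finite: assumes "finite (X::int set)" "(m::int) \<ge> 1"
  shows "\<exists>j::int. j \<ge> 0 \<and> y - m*j \<notin> X \<and> y - m*j \<le> L"
proof -
  define M where "M = Min (insert 0 X)"
  have M: "\<forall>x\<in>X. M \<le> x" using assms(1) M_def by auto
  define j where "j = \<bar>y\<bar> + \<bar>M\<bar> + \<bar>L\<bar> + 1"
  have mj: "m*j \<ge> 1*j" using assms j_def by (intro mult_right_mono) auto
  have 1: "y - m*j < M" "y - m*j \<le> L" 
  proof -
    have "y \<le> \<bar>y\<bar>" "- M \<le> \<bar>M\<bar>" "- L \<le> \<bar>L\<bar>" "0 \<le> \<bar>y\<bar>" "0 \<le> \<bar>M\<bar>" "0 \<le> \<bar>L\<bar>" by auto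
    thus "y - m*j < M" "y - m*j \<le> L" using mj j_def by linarith+
  qed
  have 2: "j \<ge> 0" unfolding j_def by simp
  have 3: "y - m*j \<notin> X"
  proof
    assume "y - m*j \<in> X"
    hence "M \<le> y - m*j" using M by blast
    thus False using 1(1) by linarith
  qed
  show ?thesis using 1 2 3 by blast
qed


lemma dvd_small: assumes "(m::int) dvd d" "\<bar>d\<bar> < m" shows "d = 0"
proof (rule ccontr)
  assume d0: "d \<noteq> 0"
  obtain k where k: "d = m*k" using assms(1) by (auto simp: dvd_def)
  have "k \<noteq> 0" using d0 k by auto
  hence "\<bar>k\<bar> \<ge> 1" by linarith
  have m0: "m > 0" using assms(2) by linarith
  have "\<bar>d\<bar> = m * \<bar>k\<bar>" using k m0 by (simp add: abs_mult)
  also have "\<dots> \<ge> m * 1" using \<open>\<bar>k\<bar> \<ge> 1\<close> m0 by (intro mult_left_mono) auto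
  finally show False using assms(2) by simp
qed

lemma mod_via_dvd: assumes "(m::int) dvd a - b" shows "a mod m = b mod m"
  using assms mod_eq_dvd_iff by blast

lemma zsep_aux: assumes "(m::int) \<ge> 1" "(E::int) \<ge> 1" "d \<noteq> 0"
  shows "E \<le> \<bar>m * (E * d)\<bar>"
proof -
  have "\<bar>m * (E * d)\<bar> = m * (E * \<bar>d\<bar>)" using assms by (simp add: abs_mult)
  moreover have "E * 1 \<le> E * \<bar>d\<bar>" using assms by (intro mult_left_mono) auto
  moreover have "1 * (E * \<bar>d\<bar>) \<le> m * (E * \<bar>d\<bar>)" using assms by (intro mult_right_mono) auto
  ultimately show ?thesis by simp
qed

theorem proposition5:
  fixes m f :: int and B F :: "int set"
  assumes "m \<ge> 2"
    and "finite B" and "B \<noteq> {}" and "\<forall>b\<in>B. m dvd b"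
    and "finite F" and "F \<noteq> {}" and "\<forall>x\<in>F. x mod m = f"
    and "1 \<le> f" and "f \<le> m - 1"
    and "m \<ge> f + 2 * f * ((int (card B) + 1) div f) + (int (card B) + 1) mod f"
  shows "arises_as_MAC ({m * int k | k. True} \<union> B \<union> F)"
proof -
  define NN where "NN = {m * int k | k. True}"
  define C where "C = NN \<union> B \<union> F"
  define n where "n = card B"
  obtain h where h: "bij_betw h B {0..<n}" using ex_bij_betw_finite_nat[OF assms(2)] n_def by auto
  define Qf where "Qf = (\<lambda>i::int. 2*f*(i div f) + i mod f)"
  define q where "q = (\<lambda>b. Qf (int (h b) + 1))"
  have f1: "f \<ge> 1" using assms by simp
  have m1: "m \<ge> 1" using assms by simp
  have hB: "\<And>b. b \<in> B \<Longrightarrow> h b < n" using h by (auto simp: bij_betw_def)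
  have hinj: "\<And>b b'. b \<in> B \<Longrightarrow> b' \<in> B \<Longrightarrow> h b = h b' \<Longrightarrow> b = b'"
    using h by (auto simp: bij_betw_def inj_on_def)
  have Qf0: "Qf 0 = 0" by (simp add: Qf_def)
  have Qfmono: "\<And>i j. i < j \<Longrightarrow> Qf i < Qf j" unfolding Qf_def using Qf_mono[OF f1] by blast
  have Qfnof: "\<And>i j. Qf i \<noteq> Qf j + f" unfolding Qf_def using Qf_nof[OF f1] by blast
  have Qfbd: "\<And>i. i \<le> int n \<Longrightarrow> Qf i + f < m"
    unfolding Qf_def using Qf_bound[OF f1 _ assms(10)] n_def by blast
  have Qfnn: "\<And>i. 0 \<le> i \<Longrightarrow> 0 \<le> Qf i" using Qfmono Qf0 by (metis order_le_less)
  define Bd where "Bd = insert 0 (q ` B)"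
  have Bd_form: "\<And>r. r \<in> Bd \<Longrightarrow> \<exists>i. 0 \<le> i \<and> i \<le> int n \<and> r = Qf i"
  proof -
    fix r assume "r \<in> Bd"
    then consider "r = 0" | b where "b \<in> B" "r = q b" unfolding Bd_def by auto
    thus "\<exists>i. 0 \<le> i \<and> i \<le> int n \<and> r = Qf i"
    proof cases
      case 1 thus ?thesis using Qf0 by (intro exI[of _ 0]) auto
    next
      case 2 thus ?thesis using hB[OF 2(1)] unfolding q_def by (intro exI[of _ "int (h b) + 1"]) auto
    qed
  qed
  have Bd_rng: "\<And>r. r \<in> Bd \<Longrightarrow> 0 \<le> r \<and> r + f < m" using Bd_form Qfbd Qfnn by blast
  have qpos: "\<And>b. b \<in> B \<Longrightarrow> 0 < q b" unfolding q_def using Qfmono[of 0] Qf0 by simp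
  have qBd: "\<And>b. b \<in> B \<Longrightarrow> q b \<in> Bd" unfolding Bd_def by auto
  have qinj: "\<And>b b'. b \<in> B \<Longrightarrow> b' \<in> B \<Longrightarrow> q b = q b' \<Longrightarrow> b = b'"
  proof -
    fix b b' assume a: "b \<in> B" "b' \<in> B" "q b = q b'"
    have "h b = h b'"
    proof (rule ccontr)
      assume "h b \<noteq> h b'"
      hence "int (h b) + 1 < int (h b') + 1 \<or> int (h b') + 1 < int (h b) + 1" by linarith
      thus False using Qfmono a(3) unfolding q_def by (metis less_irrefl)
    qed
    thus "b = b'" using hinj a by blast
  qed
  have nof: "\<And>r s. r \<in> Bd \<Longrightarrow> s \<in> Bd \<Longrightarrow> (r - f) mod m \<noteq> s"
  proof
    fix r s assume rs: "r \<in> Bd" "s \<in> Bd" and e: "(r - f) mod m = s"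
    obtain i j where ij: "r = Qf i" "s = Qf j" using Bd_form rs by blast
    show False
    proof (cases "r \<ge> f")
      case True
      hence "(r - f) mod m = r - f" using Bd_rng[OF rs(1)] f1 by (intro mod_pos_pos_trivial) auto
      hence "Qf i = Qf j + f" using e ij by simp
      thus False using Qfnof by blast
    next
      case False
      have "(r - f) mod m = (r - f + m) mod m" by simp
      also have "\<dots> = r - f + m" using False Bd_rng[OF rs(1)] f1 by (intro mod_pos_pos_trivial) auto
      finally show False using e Bd_rng[OF rs(2)] Bd_rng[OF rs(1)] by linarith
    qed
  qed
  have mf: "(- f) mod m = m - f"
  proof -
    have "(- f) mod m = (m - f) mod m" by (rule mod_via_dvd) simp
    also have "\<dots> = m - f" using assms by (intro mod_pos_pos_trivial) auto
    finally show ?thesis .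
  qed
  define MX where "MX = Max F"
  define MI where "MI = Min F"
  define MB where "MB = Min B"
  have FMX: "\<And>x. x \<in> F \<Longrightarrow> MI \<le> x \<and> x \<le> MX" unfolding MX_def MI_def using assms(5) by auto
  have MXF: "MX \<in> F" unfolding MX_def using assms(5,6) by simp
  have BMB: "\<And>b. b \<in> B \<Longrightarrow> MB \<le> b" unfolding MB_def using assms(2) by simp
  define D where "D = MX - MI"
  have D0: "D \<ge> 0" using FMX MXF D_def by force
  define T where "T = 1 + 2*\<bar>MX\<bar> + 2*\<bar>MI\<bar> + \<bar>MB\<bar>"
  define z where "z = (\<lambda>x. m * ((2*D+1)*(x - MX) - T))"
  have zle: "\<And>x. x \<in> F \<Longrightarrow> z x \<le> - T"
  proof -
    fix x assume x: "x \<in> F"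
    have "(2*D+1)*(x - MX) \<le> 0" using FMX[OF x] D0 by (simp add: mult_nonneg_nonpos)
    hence i: "(2*D+1)*(x - MX) - T \<le> - T" "(2*D+1)*(x - MX) - T < 0" unfolding T_def by auto
    have "m * ((2*D+1)*(x - MX) - T) \<le> 1 * ((2*D+1)*(x - MX) - T)"
      using i m1 by (intro mult_right_mono_neg) auto
    note k = order_trans[OF this[unfolded mult_1] i(1)]
    show "z x \<le> - T" unfolding z_def by (rule k)
  qed
  have zdvd: "\<And>x. m dvd z x" unfolding z_def by simp
  have zsep: "\<And>x x'. x \<noteq> x' \<Longrightarrow> 2*D+1 \<le> \<bar>z x - z x'\<bar>"
  proof -
    fix x x' :: int assume "x \<noteq> x'"
    have "z x - z x' = m * ((2*D+1) * (x - x'))" unfolding z_def by (simp add: algebra_simps)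
    thus "2*D+1 \<le> \<bar>z x - z x'\<bar>" using zsep_aux[OF m1, of "2*D+1" "x - x'"] D0 \<open>x \<noteq> x'\<close> by simp
  qed
  define R0 where "R0 = {z x - c | x c. x \<in> F \<and> c \<in> F \<and> c \<noteq> x}"
  define S where "S = (\<lambda>b. {b + q b - x | x. x \<in> F})"
  have finR0: "finite R0"
  proof -
    have "R0 \<subseteq> (\<lambda>(x, c). z x - c) ` (F \<times> F)" unfolding R0_def by auto
    thus ?thesis using assms(5) finite_subset by blast
  qed
  have finS: "\<And>b. finite (S b)" unfolding S_def using assms(5) by simp
  define W where "W = {w. w = 0 \<or> (\<exists>b\<in>B. w = q b) \<or> (w mod m = m - f \<and> w \<le> -1 - MX \<and> w \<notin> R0)
     \<or> (\<exists>b\<in>B. w mod m = (q b - f) mod m \<and> w \<notin> S b)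
     \<or> (w mod m \<notin> Bd \<and> w mod m \<noteq> m - f \<and> (\<forall>b\<in>B. w mod m \<noteq> (q b - f) mod m))}"
  have q_mod: "\<And>b. b \<in> B \<Longrightarrow> q b mod m = q b"
  proof -
    fix b assume b: "b \<in> B"
    have "0 \<le> q b" "q b < m" using Bd_rng[OF qBd[OF b]] f1 by auto
    thus "q b mod m = q b" by (intro mod_pos_pos_trivial)
  qed
  have mf_nBd: "m - f \<notin> Bd" using Bd_rng by force
  have mf_ne: "\<And>b. b \<in> B \<Longrightarrow> (q b - f) mod m \<noteq> m - f"
  proof
    fix b assume b: "b \<in> B" and e: "(q b - f) mod m = m - f"
    hence "(q b - f) mod m = (- f) mod m" using mf by simp
    hence "m dvd (q b - f) - (- f)" by (simp only: mod_eq_dvd_iff)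
    hence "m dvd q b" by simp
    moreover have "\<bar>q b\<bar> < m" using Bd_rng[OF qBd[OF b]] f1 by simp
    ultimately have "q b = 0" using dvd_small by blast
    thus False using qpos b by force
  qed
  have qf_inj: "\<And>b b'. b \<in> B \<Longrightarrow> b' \<in> B \<Longrightarrow> (q b - f) mod m = (q b' - f) mod m \<Longrightarrow> b = b'"
  proof -
    fix b b' assume b: "b \<in> B" "b' \<in> B" and e: "(q b - f) mod m = (q b' - f) mod m"
    hence "m dvd (q b - f) - (q b' - f)" by (simp only: mod_eq_dvd_iff)
    hence "m dvd q b - q b'" by simp
    moreover have "\<bar>q b - q b'\<bar> < m" using Bd_rng[OF qBd[OF b(1)]] Bd_rng[OF qBd[OF b(2)]] f1 by (simp add: abs_less_iff)
    ultimately have "q b = q b'" using dvd_small by fastforce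
    thus "b = b'" using qinj b by blast
  qed
  have Wd: "\<And>w. w \<in> W \<Longrightarrow> w = 0 \<or> (\<exists>b\<in>B. w = q b) \<or> (w mod m = m - f \<and> w \<le> -1 - MX \<and> w \<notin> R0)
     \<or> (\<exists>b\<in>B. w mod m = (q b - f) mod m \<and> w \<notin> S b)
     \<or> (w mod m \<notin> Bd \<and> w mod m \<noteq> m - f \<and> (\<forall>b\<in>B. w mod m \<noteq> (q b - f) mod m))"
    unfolding W_def by blast
  have zBd: "0 \<in> Bd" unfolding Bd_def by simp
  have inv0: "\<And>w. w \<in> W \<Longrightarrow> w mod m = 0 \<Longrightarrow> w = 0"
  proof -
    fix w assume w: "w \<in> W" "w mod m = 0"
    from Wd[OF w(1)] show "w = 0"
    proof (elim disjE bexE conjE)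
      fix b assume "b \<in> B" "w = q b" thus "w = 0" using w q_mod qpos by force
    next
      assume "w mod m = m - f" thus "w = 0" using w assms(9) by simp
    next
      fix b assume "b \<in> B" "w mod m = (q b - f) mod m"
      thus "w = 0" using w nof[OF qBd zBd] by simp
    next
      assume "w mod m \<notin> Bd" thus "w = 0" using w zBd by simp
    qed simp
  qed
  have invq: "\<And>w b. w \<in> W \<Longrightarrow> b \<in> B \<Longrightarrow> w mod m = q b \<Longrightarrow> w = q b"
  proof -
    fix w b assume w: "w \<in> W" "b \<in> B" "w mod m = q b"
    from Wd[OF w(1)] show "w = q b"
    proof (elim disjE bexE conjE)
      assume "w = 0" thus "w = q b" using w qpos by force
    next
      fix b' assume "b' \<in> B" "w = q b'" thus "w = q b" using w q_mod by force
    next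
      assume "w mod m = m - f" thus "w = q b" using w mf_nBd qBd by force
    next
      fix b' assume "b' \<in> B" "w mod m = (q b' - f) mod m"
      thus "w = q b" using w nof[OF qBd qBd] by force
    next
      assume "w mod m \<notin> Bd" thus "w = q b" using w qBd by force
    qed
  qed
  have invmf: "\<And>w. w \<in> W \<Longrightarrow> w mod m = m - f \<Longrightarrow> w \<le> -1 - MX \<and> w \<notin> R0"
  proof -
    fix w assume w: "w \<in> W" "w mod m = m - f"
    from Wd[OF w(1)] show "w \<le> -1 - MX \<and> w \<notin> R0"
    proof (elim disjE bexE conjE)
      assume "w = 0" thus ?thesis using w assms(9) by simp
    next
      fix b' assume "b' \<in> B" "w = q b'" thus ?thesis using w q_mod mf_nBd qBd by force
    next
      fix b' assume "b' \<in> B" "w mod m = (q b' - f) mod m"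
      thus ?thesis using w mf_ne by force
    next
      assume "w mod m \<notin> Bd" "w mod m \<noteq> m - f" thus ?thesis using w by simp
    qed simp
  qed
  have invS: "\<And>w b. w \<in> W \<Longrightarrow> b \<in> B \<Longrightarrow> w mod m = (q b - f) mod m \<Longrightarrow> w \<notin> S b"
  proof -
    fix w b assume w: "w \<in> W" "b \<in> B" "w mod m = (q b - f) mod m"
    from Wd[OF w(1)] show "w \<notin> S b"
    proof (elim disjE bexE conjE)
      assume "w = 0" thus ?thesis using w nof[OF qBd zBd] by force
    next
      fix b' assume "b' \<in> B" "w = q b'" thus ?thesis using w q_mod nof[OF qBd qBd] by force
    next
      assume "w mod m = m - f" thus ?thesis using w mf_ne by force
    next
      fix b' assume "b' \<in> B" "w mod m = (q b' - f) mod m" "w \<notin> S b'"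
      thus ?thesis using w qf_inj by force
    next
      assume "\<forall>b\<in>B. w mod m \<noteq> (q b - f) mod m" thus ?thesis using w by blast
    qed
  qed
  have fmod: "f mod m = f" using assms(8,9) by (intro mod_pos_pos_trivial) auto
  have dN: "\<And>c. c \<in> NN \<Longrightarrow> m dvd c \<and> c \<ge> 0" unfolding NN_def using m1 by auto
  have dB: "\<And>c. c \<in> B \<Longrightarrow> m dvd c" using assms(4) by blast
  have dF: "\<And>x. x \<in> F \<Longrightarrow> m dvd x - f"
  proof -
    fix x assume "x \<in> F"
    hence "x mod m = f mod m" using assms(7) fmod by simp
    thus "m dvd x - f" by (simp only: mod_eq_dvd_iff)
  qed
  have C_cases: "\<And>c. c \<in> C \<Longrightarrow> c \<notin> F \<Longrightarrow> m dvd c \<and> (c \<in> NN \<or> c \<in> B)"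
    unfolding C_def using dN dB by blast
  have TMB: "- T < MB" "- T < 0" unfolding T_def by auto
  have priv: "\<And>c. c \<in> C \<Longrightarrow> \<exists>zz. \<forall>c'\<in>C. \<forall>w\<in>W. c' + w = zz \<longrightarrow> c' = c"
  proof -
    fix c assume cC: "c \<in> C"
    hence "c \<in> NN \<or> c \<in> B \<or> c \<in> F" unfolding C_def by blast
    then consider (N) "c \<in> NN" | (B) "c \<in> B" | (F) "c \<in> F" by blast
    thus "\<exists>zz. \<forall>c'\<in>C. \<forall>w\<in>W. c' + w = zz \<longrightarrow> c' = c"
    proof cases
      case N
      show ?thesis
      proof (intro exI ballI impI)
        fix c' w assume c': "c' \<in> C" "w \<in> W" "c' + w = c"
        show "c' = c"
        proof (cases "c' \<in> F")
          case True
          have "m dvd c - (c' - f)" using dN[OF N] dF[OF True] by (metis dvd_diff)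
          moreover have "c - (c' - f) = w - (- f)" using c' by simp
          ultimately have "w mod m = (- f) mod m" using mod_via_dvd by metis
          hence "w \<le> -1 - MX" using invmf c' mf by simp
          thus ?thesis using FMX[OF True] dN[OF N] c' by linarith
        next
          case False
          have "m dvd c - c'" using dN[OF N] C_cases[OF c'(1) False] by (metis dvd_diff)
          moreover have "c - c' = w" using c' by simp
          ultimately have "w mod m = 0" by simp
          thus ?thesis using inv0 c' by force
        qed
      qed
    next
      case B
      show ?thesis
      proof (intro exI ballI impI)
        fix c' w assume c': "c' \<in> C" "w \<in> W" "c' + w = c + q c"
        show "c' = c"
        proof (cases "c' \<in> F")
          case True
          have "m dvd c - (c' - f)" using dB[OF B] dF[OF True] by (metis dvd_diff)
          moreover have "c - (c' - f) = w - (q c - f)" using c' by simp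
          ultimately have "w mod m = (q c - f) mod m" using mod_via_dvd by metis
          hence "w \<notin> S c" using invS c' B by simp
          moreover have "w \<in> S c" unfolding S_def using c' True by force
          ultimately show ?thesis by blast
        next
          case False
          have "m dvd c - c'" using dB[OF B] C_cases[OF c'(1) False] by (metis dvd_diff)
          moreover have "c - c' = w - q c" using c' by simp
          ultimately have "w mod m = q c mod m" using mod_via_dvd by metis
          hence "w = q c" using invq c' B q_mod by simp
          thus ?thesis using c' by simp
        qed
      qed
    next
      case F
      show ?thesis
      proof (intro exI ballI impI)
        fix c' w assume c': "c' \<in> C" "w \<in> W" "c' + w = z c"
        show "c' = c"
        proof (cases "c' \<in> F")
          case True
          show ?thesis
          proof (rule ccontr)
            assume ne: "c' \<noteq> c"
            have "m dvd z c - (c' - f)" using zdvd dF[OF True] by (metis dvd_diff)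
            moreover have "z c - (c' - f) = w - (- f)" using c' by simp
            ultimately have "w mod m = (- f) mod m" using mod_via_dvd by metis
            hence "w \<notin> R0" using invmf c' mf by simp
            moreover have "w \<in> R0" unfolding R0_def using c' True F ne by force
            ultimately show False by blast
          qed
        next
          case False
          have "m dvd z c - c'" using zdvd C_cases[OF c'(1) False] by (metis dvd_diff)
          moreover have "z c - c' = w" using c' by simp
          ultimately have "w mod m = 0" by simp
          hence "w = 0" using inv0 c' by force
          hence e: "c' = z c" using c' by simp
          have "z c \<le> - T" using zle F by blast
          thus ?thesis using C_cases[OF c'(1) False] e dN BMB TMB by force
        qed
      qed
    qed
  qed
  have clus: "\<And>y. y mod m = 0 \<Longrightarrow> y < 0 \<Longrightarrow> \<exists>x'\<in>F. y - x' \<le> -1 - MX \<and> y - x' \<notin> R0"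
  proof -
    fix y :: int assume y: "y mod m = 0" "y < 0"
    show "\<exists>x'\<in>F. y - x' \<le> -1 - MX \<and> y - x' \<notin> R0"
    proof (cases "y - MX \<in> R0")
      case False
      have "y - MX \<le> -1 - MX" using y by simp
      thus ?thesis using MXF False by blast
    next
      case True
      then obtain x0 c0 where x0: "y - MX = z x0 - c0" "x0 \<in> F" "c0 \<in> F" "c0 \<noteq> x0"
        unfolding R0_def by blast
      have zx0: "z x0 \<le> - T" using zle x0 by blast
      have Tb: "T \<ge> 1 + 2*MX - 2*MI" unfolding T_def by auto
      have low: "\<And>x'. x' \<in> F \<Longrightarrow> y - x' \<le> -1 - MX"
      proof -
        fix x' assume "x' \<in> F"
        thus "y - x' \<le> -1 - MX" using FMX[OF x0(3)] FMX zx0 x0(1) Tb by force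
      qed
      show ?thesis
      proof (rule ccontr)
        assume nex: "\<not> (\<exists>x'\<in>F. y - x' \<le> -1 - MX \<and> y - x' \<notin> R0)"
        define t where "t = z x0 - y"
        have step: "\<And>x'. x' \<in> F \<Longrightarrow> x' + t \<in> F - {x0}"
        proof -
          fix x' assume x': "x' \<in> F"
          hence "y - x' \<in> R0" using nex low by blast
          then obtain x'' c'' where xc: "y - x' = z x'' - c''" "x'' \<in> F" "c'' \<in> F" "c'' \<noteq> x''"
            unfolding R0_def by blast
          have "x'' = x0"
          proof (rule ccontr)
            assume "x'' \<noteq> x0"
            hence sep: "2*D+1 \<le> \<bar>z x'' - z x0\<bar>" using zsep by blast
            have "z x'' - z x0 = c'' - c0 + MX - x'" using xc(1) x0(1) by simp
            moreover have "\<bar>c'' - c0 + MX - x'\<bar> \<le> 2*D"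
              using FMX[OF xc(3)] FMX[OF x0(3)] FMX[OF x'] D_def by (simp add: abs_le_iff)
            ultimately show False using sep by simp
          qed
          hence "c'' = x' + t" using xc(1) t_def by simp
          thus "x' + t \<in> F - {x0}" using xc \<open>x'' = x0\<close> by simp
        qed
        hence "t = 0" using transl_zero[OF assms(5,6)] by blast
        thus False using step[OF x0(2)] by simp
      qed
    qed
  qed
  have cover: "\<And>y. \<exists>c\<in>C. \<exists>w\<in>W. y = c + w"
  proof -
    fix y :: int
    have NNi: "\<And>j. j \<ge> 0 \<Longrightarrow> m * j \<in> C" unfolding C_def NN_def
      by (metis (mono_tags, lifting) UnI1 mem_Collect_eq nonneg_eq_int)
    have ymr: "0 \<le> y mod m" "y mod m < m" using m1 by auto
    consider (Z) "y mod m = 0" | (Q) b where "b \<in> B" "y mod m = q b" | (MF) "y mod m = m - f"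
      | (P) b where "b \<in> B" "y mod m = (q b - f) mod m"
      | (O) "y mod m \<notin> Bd" "y mod m \<noteq> m - f" "\<forall>b\<in>B. y mod m \<noteq> (q b - f) mod m"
      unfolding Bd_def by blast
    thus "\<exists>c\<in>C. \<exists>w\<in>W. y = c + w"
    proof cases
      case Z
      have my: "m dvd y" using Z by (simp add: dvd_eq_mod_eq_0)
      show ?thesis
      proof (cases "y \<ge> 0")
        case True
        have "y = m * (y div m)" using my by simp
        moreover have "y div m \<ge> 0" using True m1 by (simp add: pos_imp_zdiv_nonneg_iff)
        moreover have "0 \<in> W" unfolding W_def by simp
        ultimately show ?thesis using NNi by (metis add.right_neutral)
      next
        case False
        obtain x' where x': "x' \<in> F" "y - x' \<le> -1 - MX" "y - x' \<notin> R0" using clus Z False by force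
        have "m dvd y - (x' - f)" using my dF[OF x'(1)] by (metis dvd_diff)
        moreover have "y - (x' - f) = (y - x') - (- f)" by simp
        ultimately have "(y - x') mod m = (- f) mod m" using mod_via_dvd by metis
        hence "y - x' \<in> W" using x' mf unfolding W_def by simp
        moreover have "x' \<in> C" unfolding C_def using x' by simp
        ultimately show ?thesis by force
      qed
    next
      case (Q b)
      show ?thesis
      proof (cases "y = b + q b")
        case True
        have "q b \<in> W" unfolding W_def using Q by blast
        moreover have "b \<in> C" unfolding C_def using Q by simp
        ultimately show ?thesis using True by blast
      next
        case False
        have "\<exists>x'\<in>F. y - x' \<notin> S b"
        proof (rule ccontr)
          assume "\<not> (\<exists>x'\<in>F. y - x' \<notin> S b)"
          hence A: "\<forall>x'\<in>F. \<exists>x. y - x' = b + q b - x \<and> x \<in> F" unfolding S_def by blast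
          have "\<forall>x'\<in>F. x' + (b + q b - y) \<in> F"
          proof
            fix x' assume "x' \<in> F"
            then obtain x where "y - x' = b + q b - x" "x \<in> F" using A by blast
            moreover have "x' + (b + q b - y) = x" using calculation(1) by simp
            ultimately show "x' + (b + q b - y) \<in> F" by simp
          qed
          hence "b + q b - y = 0" using transl_zero[OF assms(5,6)] by blast
          thus False using False by simp
        qed
        then obtain x' where x': "x' \<in> F" "y - x' \<notin> S b" by blast
        have "y mod m = q b mod m" using Q q_mod by simp
        hence "m dvd y - q b" by (simp only: mod_eq_dvd_iff)
        hence "m dvd (y - q b) - (x' - f)" using dF[OF x'(1)] by (metis dvd_diff)
        moreover have "(y - q b) - (x' - f) = (y - x') - (q b - f)" by simp
        ultimately have "(y - x') mod m = (q b - f) mod m" using mod_via_dvd by metis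
        hence "y - x' \<in> W" using x' Q unfolding W_def by blast
        moreover have "x' \<in> C" unfolding C_def using x' by simp
        ultimately show ?thesis by force
      qed
    next
      case MF
      obtain j where j: "j \<ge> 0" "y - m*j \<notin> R0" "y - m*j \<le> -1 - MX"
        using below_finite[OF finR0 m1] by blast
      have "(y - m*j) mod m = y mod m" by (rule mod_via_dvd) simp
      hence "y - m*j \<in> W" using MF j unfolding W_def by simp
      thus ?thesis using NNi[OF j(1)] by force
    next
      case (P b)
      obtain j where j: "j \<ge> 0" "y - m*j \<notin> S b"
        using below_finite[OF finS m1] by blast
      have "(y - m*j) mod m = y mod m" by (rule mod_via_dvd) simp
      hence "\<exists>b\<in>B. (y - m*j) mod m = (q b - f) mod m \<and> y - m*j \<notin> S b" using P j by auto
      hence "y - m*j \<in> W" unfolding W_def by blast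
      thus ?thesis using NNi[OF j(1)] by force
    next
      case O
      have "y \<in> W" using O unfolding W_def by blast
      thus ?thesis using NNi[of 0] by force
    qed
  qed
  have "is_MAC C W"
    unfolding is_MAC_def
  proof (intro conjI allI impI)
    show "sumset C W = UNIV" unfolding sumset_def using cover by blast
  next
    fix C' assume sub: "C' \<subset> C"
    then obtain c where c: "c \<in> C" "c \<notin> C'" by blast
    obtain zz where zz: "\<forall>c'\<in>C. \<forall>w\<in>W. c' + w = zz \<longrightarrow> c' = c" using priv[OF c(1)] by blast
    show "sumset C' W \<noteq> UNIV"
    proof
      assume "sumset C' W = UNIV"
      hence "zz \<in> sumset C' W" by simp
      then obtain c' w where "zz = c' + w" "c' \<in> C'" "w \<in> W" unfolding sumset_def by blast
      thus False using zz sub c by blast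
    qed
  qed
  thus ?thesis unfolding arises_as_MAC_def C_def NN_def by blast
qed

end
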